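(* Let $G$ be a graph, $\mathcal U=\{U_1,\dots,U_m\}$ a partition of $V(G)$, and $\mathcal C$ a $\mathcal U$-connecting path system in $G$. Then there exists a $\mathcal U$-connecting path system $\mathcal C'$ in $G$ such that (a) $\mathcal C'$ contains no edge with both ends in the same $U_i$, and (b) for all $1\leq i<j\leq m$, $\mathcal C'$ contains at most $2$ edges with one end in $U_i$ and the other in $U_j$.
   Context: A path system in $G$ is a collection of vertex-disjoint (non-trivial) paths in $G$, also viewed as the subgraph formed by their union. Given a partition $\mathcal U$ of $V(G)$ and a path system $\mathcal P$, the reduced multigraph $R_{\mathcal U}(\mathcal P)$ has vertex set $\mathcal U$ and, for each path of $\mathcal P$ with endpoints in $U\in\mathcal U$ and $U'\in\mathcal U$, one edge between $U$ and $U'$ (a loop if $U=U'$; loops contribute 2 to the degree). $\mathcal P$ is $\mathcal U$-connecting if $R_{\mathcal U}(\mathcal P)$ is Eulerian, i.e. connected (on all of $\mathcal U$) with every vertex of even degree. *)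

theory Defs
  imports Main "HOL-Library.Disjoint_Sets"
begin

definition is_graph :: "'a set \<Rightarrow> ('a \<Rightarrow> 'a \<Rightarrow> bool) \<Rightarrow> bool" where
  "is_graph V E \<longleftrightarrow> finite V \<and>
     (\<forall>u v. E u v \<longrightarrow> u \<in> V \<and> v \<in> V \<and> u \<noteq> v \<and> E v u)"

definition is_path :: "('a \<Rightarrow> 'a \<Rightarrow> bool) \<Rightarrow> 'a list \<Rightarrow> bool" where
  "is_path E p \<longleftrightarrow> length p \<ge> 2 \<and> distinct p \<and>
     (\<forall>i. Suc i < length p \<longrightarrow> E (p ! i) (p ! Suc i))"

definition path_system :: "('a \<Rightarrow> 'a \<Rightarrow> bool) \<Rightarrow> 'a list set \<Rightarrow> bool" where
  "path_system E P \<longleftrightarrow> (\<forall>p\<in>P. is_path E p) \<and>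
     (\<forall>p\<in>P. \<forall>q\<in>P. p \<noteq> q \<longrightarrow> set p \<inter> set q = {})"

definition ps_edges :: "'a list set \<Rightarrow> 'a set set" where
  "ps_edges P = {{p ! i, p ! Suc i} | p i. p \<in> P \<and> Suc i < length p}"

definition red_adj :: "'a list set \<Rightarrow> 'a set \<Rightarrow> 'a set \<Rightarrow> bool" where
  "red_adj P U U' \<longleftrightarrow> (\<exists>p\<in>P. (hd p \<in> U \<and> last p \<in> U') \<or> (hd p \<in> U' \<and> last p \<in> U))"

text \<open>Degree of U in R_U(P): each path contributes the number of its endpoints in U
  (so a loop contributes 2).\<close>
definition red_degree :: "'a list set \<Rightarrow> 'a set \<Rightarrow> nat" where
  "red_degree P U = (\<Sum>p\<in>P. (if hd p \<in> U then 1 else 0) + (if last p \<in> U then 1 else 0))"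

definition reduced_eulerian :: "'a set set \<Rightarrow> 'a list set \<Rightarrow> bool" where
  "reduced_eulerian \<U> P \<longleftrightarrow>
     (\<forall>U\<in>\<U>. \<forall>U'\<in>\<U>. (\<lambda>A B. A \<in> \<U> \<and> B \<in> \<U> \<and> red_adj P A B)\<^sup>*\<^sup>* U U') \<and>
     (\<forall>U\<in>\<U>. even (red_degree P U))"

definition U_connecting :: "('a \<Rightarrow> 'a \<Rightarrow> bool) \<Rightarrow> 'a set set \<Rightarrow> 'a list set \<Rightarrow> bool" where
  "U_connecting E \<U> P \<longleftrightarrow> path_system E P \<and> reduced_eulerian \<U> P"

end

theory Submission
  imports Defs
begin



lemma part_uniq:
  assumes "partition_on V PP" "Z \<in> PP" "Z' \<in> PP" "v \<in> Z" "v \<in> Z'"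
  shows "Z = Z'"
  using assms unfolding partition_on_def disjoint_def by blast

lemma part_ex:
  assumes "partition_on V PP" "v \<in> V"
  shows "\<exists>Z\<in>PP. v \<in> Z"
  using assms unfolding partition_on_def by blast

lemma path_set_V:
  assumes "is_graph V E" "is_path E p"
  shows "set p \<subseteq> V"
proof
  fix v assume "v \<in> set p"
  then obtain k where k: "k < length p" "p ! k = v" by (auto simp: in_set_conv_nth)
  show "v \<in> V"
  proof (cases "Suc k < length p")
    case True
    then have "E (p!k) (p!Suc k)" using assms(2) unfolding is_path_def by blast
    then show ?thesis using assms(1) k unfolding is_graph_def by blast
  next
    case False
    then have k1: "k = Suc (k - 1)" using k assms(2) unfolding is_path_def by auto
    have "Suc (k-1) < length p" using k k1 by simp
    then have "E (p!(k-1)) (p!Suc (k-1))" using assms(2) unfolding is_path_def by blast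
    then show ?thesis using assms(1) k k1 unfolding is_graph_def by metis
  qed
qed

lemma ps_finite:
  assumes "is_graph V E" "path_system E P"
  shows "finite P"
proof (rule inj_on_finite[where f=hd and B=V])
  show "inj_on hd P"
  proof
    fix p q assume pq: "p \<in> P" "q \<in> P" "hd p = hd q"
    have "p \<noteq> []" using pq assms(2) unfolding path_system_def is_path_def by auto
    then have "hd p \<in> set p \<inter> set q" using pq assms(2) unfolding path_system_def is_path_def
      by (metis IntI hd_in_set list.size(3) not_numeral_le_zero)
    then show "p = q" using pq assms(2) unfolding path_system_def by blast
  qed
  show "hd ` P \<subseteq> V"
  proof
    fix x assume "x \<in> hd ` P"
    then obtain p where p: "p \<in> P" "x = hd p" by auto
    then have "is_path E p" using assms(2) unfolding path_system_def by auto
    moreover then have "p \<noteq> []" unfolding is_path_def by auto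
    ultimately show "x \<in> V" using path_set_V[OF assms(1)] p hd_in_set by blast
  qed
  show "finite V" using assms(1) unfolding is_graph_def by auto
qed

lemma hd_last_V:
  assumes "is_graph V E" "is_path E p"
  shows "hd p \<in> V" "last p \<in> V"
proof -
  have "p \<noteq> []" using assms(2) unfolding is_path_def by auto
  then show "hd p \<in> V" "last p \<in> V" using path_set_V[OF assms] by auto
qed




definition cutp :: "'a list \<Rightarrow> nat \<Rightarrow> nat \<Rightarrow> 'a list set" where
  "cutp p i j = (if 0 < i then {take (Suc i) p} else {}) \<union> (if Suc j < length p then {drop j p} else {})"

definition dg :: "'a set \<Rightarrow> 'a list \<Rightarrow> nat" where
  "dg Z r = (if hd r \<in> Z then 1 else 0) + (if last r \<in> Z then 1 else 0)"

definition ccut :: "'a list set \<Rightarrow> 'a set \<Rightarrow> bool" where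
  "ccut P Y \<longleftrightarrow> (\<forall>r\<in>P. (hd r \<in> Y) = (last r \<in> Y))"

definition nedges :: "'a list set \<Rightarrow> nat" where
  "nedges P = (\<Sum>p\<in>P. length p - 1)"

lemma red_degree_dg: "red_degree P Z = sum (dg Z) P"
  unfolding red_degree_def dg_def by simp

context
  fixes p :: "'a list" and i j :: nat
  assumes ij: "i < j" "j < length p" and dp: "distinct p"
begin

lemma cut_take_ne_drop: "take (Suc i) p \<noteq> drop j p"
proof
  assume h: "take (Suc i) p = drop j p"
  have "take (Suc i) p ! 0 = p ! 0" using ij by simp
  moreover have "drop j p ! 0 = p ! j" using ij by simp
  ultimately have "p ! 0 = p ! j" using h by simp
  then show False using dp ij nth_eq_iff_index_eq by fastforce
qed

lemma cut_sum: "sum f (cutp p i j) = (if 0 < i then f (take (Suc i) p) else 0) + (if Suc j < length p then f (drop j p) else 0)"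
  using cut_take_ne_drop unfolding cutp_def by (auto simp: add.commute)

lemma cut_subset: "q \<in> cutp p i j \<Longrightarrow> set q \<subseteq> set p"
  unfolding cutp_def by (auto split: if_splits dest: in_set_takeD in_set_dropD)

lemma cut_disj: "q1 \<in> cutp p i j \<Longrightarrow> q2 \<in> cutp p i j \<Longrightarrow> q1 \<noteq> q2 \<Longrightarrow> set q1 \<inter> set q2 = {}"
proof -
  have "set (take (Suc i) p) \<inter> set (drop j p) = {}"
  proof -
    have "set (take (Suc i) p) \<subseteq> set (take j p)" using ij
      by (metis Suc_leI set_take_subset_set_take)
    then show ?thesis using set_take_disj_set_drop_if_distinct[OF dp, of j j] by auto
  qed
  then show "q1 \<in> cutp p i j \<Longrightarrow> q2 \<in> cutp p i j \<Longrightarrow> q1 \<noteq> q2 \<Longrightarrow> set q1 \<inter> set q2 = {}"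
    unfolding cutp_def by (auto split: if_splits)
qed

lemma cut_len: "q \<in> cutp p i j \<Longrightarrow> length q < length p \<and> 2 \<le> length q"
  using ij unfolding cutp_def by (auto split: if_splits)

lemma cut_path: assumes "is_path E p" shows "q \<in> cutp p i j \<Longrightarrow> is_path E q"
  using ij assms unfolding cutp_def is_path_def by (auto split: if_splits)

lemma cut_ccut: "ccut (cutp p i j) Y \<longleftrightarrow> ((hd p \<in> Y) = (p!i \<in> Y) \<and> (p!j \<in> Y) = (last p \<in> Y))"
proof -
  have ne: "p \<noteq> []" using ij by auto
  have h1: "hd (take (Suc i) p) = hd p" using ne by simp
  have l1: "last (take (Suc i) p) = p ! i" using ij by (subst last_conv_nth) (auto simp: min_def)
  have h2: "hd (drop j p) = p ! j" using ij by (simp add: hd_drop_conv_nth)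
  have l2: "last (drop j p) = last p" using ij by simp
  have i0: "i = 0 \<Longrightarrow> p ! i = hd p" using ne by (simp add: hd_conv_nth)
  have jl: "\<not> Suc j < length p \<Longrightarrow> p ! j = last p"
  proof -
    assume "\<not> Suc j < length p"
    then have "j = length p - 1" using ij by simp
    then show ?thesis using ne by (simp add: last_conv_nth)
  qed
  show ?thesis unfolding ccut_def cutp_def
    using h1 l1 h2 l2 i0 jl by (auto split: if_splits)
qed

lemma cut_nedges: "sum (\<lambda>q. length q - 1) (cutp p i j) = i + (length p - 1 - j)"
  using ij by (simp add: cut_sum) arith

lemma cut_dg: "even (sum (dg Z) (cutp p i j) + dg Z p + (if p!i \<in> Z then 1 else 0) + (if p!j \<in> Z then 1 else 0))"
proof -
  have ne: "p \<noteq> []" using ij by auto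
  have h1: "hd (take (Suc i) p) = hd p" using ne by simp
  have l1: "last (take (Suc i) p) = p ! i" using ij by (subst last_conv_nth) (auto simp: min_def)
  have h2: "hd (drop j p) = p ! j" using ij by (simp add: hd_drop_conv_nth)
  have l2: "last (drop j p) = last p" using ij by simp
  have i0: "i = 0 \<Longrightarrow> p ! i = hd p" using ne by (simp add: hd_conv_nth)
  have jl: "\<not> Suc j < length p \<Longrightarrow> p ! j = last p"
  proof -
    assume "\<not> Suc j < length p"
    then have "j = length p - 1" using ij by simp
    then show ?thesis using ne by (simp add: last_conv_nth)
  qed
  show ?thesis unfolding cut_sum dg_def
    using h1 l1 h2 l2 i0 jl by auto
qed

end

lemma one_cut:
  assumes ps: "path_system E P" and pP: "p \<in> P" and ij: "i < j" "j < length p"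
  defines "P1 \<equiv> (P - {p}) \<union> cutp p i j"
  shows "path_system E P1"
    and "finite P \<Longrightarrow> sum f P1 + f p = sum f P + sum f (cutp p i j)"
    and "ccut P1 Y \<longleftrightarrow> ccut (P - {p}) Y \<and> (hd p \<in> Y) = (p!i \<in> Y) \<and> (p!j \<in> Y) = (last p \<in> Y)"
    and "q \<in> P \<Longrightarrow> q \<noteq> p \<Longrightarrow> q \<in> P1 \<and> P1 - {q} = ((P - {q}) - {p}) \<union> cutp p i j"
proof -
  have pp: "is_path E p" using ps pP unfolding path_system_def by auto
  then have dp: "distinct p" unfolding is_path_def by auto
  note cs = cut_subset[OF ij dp] cut_disj[OF ij dp] cut_len[OF ij dp] cut_path[OF ij dp pp]
  have notP: "q \<notin> P" if "q \<in> cutp p i j" for q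
  proof
    assume qP: "q \<in> P"
    have "q \<noteq> p" using cs(3)[OF that] by auto
    then have "set q \<inter> set p = {}" using ps qP pP unfolding path_system_def by auto
    then have "set q = {}" using cs(1)[OF that] by (simp add: Int_absorb2)
    then show False using cs(3)[OF that] by simp
  qed
  show "path_system E P1"
    unfolding path_system_def P1_def
  proof (intro conjI ballI impI)
    fix q assume "q \<in> P - {p} \<union> cutp p i j"
    then show "is_path E q" using ps cs(4) unfolding path_system_def by auto
  next
    fix q r assume q: "q \<in> P - {p} \<union> cutp p i j" and r: "r \<in> P - {p} \<union> cutp p i j" and qr: "q \<noteq> r"
    have dpr: "set p \<inter> set s = {}" if "s \<in> P - {p}" for s using ps pP that unfolding path_system_def by auto
    have dd: "\<And>a b. a \<in> P \<Longrightarrow> b \<in> P \<Longrightarrow> a \<noteq> b \<Longrightarrow> set a \<inter> set b = {}"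
      using ps unfolding path_system_def by simp
    show "set q \<inter> set r = {}"
    proof (cases "q \<in> cutp p i j")
      case qc: True
      show ?thesis
      proof (cases "r \<in> cutp p i j")
        case True then show ?thesis using qc qr cs(2) by blast
      next
        case False then have "r \<in> P - {p}" using r by blast
        then show ?thesis using dpr[of r] cs(1)[OF qc] by blast
      qed
    next
      case qc: False then have qP: "q \<in> P - {p}" using q by blast
      show ?thesis
      proof (cases "r \<in> cutp p i j")
        case True then show ?thesis using dpr[OF qP] cs(1)[OF True] by blast
      next
        case False then have "r \<in> P - {p}" using r by blast
        then show ?thesis using dd qP qr by blast
      qed
    qed
  qed
  show "finite P \<Longrightarrow> sum f P1 + f p = sum f P + sum f (cutp p i j)"
  proof -
    assume fP: "finite P"
    have fc: "finite (cutp p i j)" unfolding cutp_def by auto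
    have "sum f P1 = sum f (P - {p}) + sum f (cutp p i j)"
      unfolding P1_def using fP fc notP by (intro sum.union_disjoint) auto
    moreover have "sum f P = sum f (P - {p}) + f p" using fP pP by (simp add: sum.remove add.commute)
    ultimately show ?thesis by (simp add: ac_simps)
  qed
  show "ccut P1 Y \<longleftrightarrow> ccut (P - {p}) Y \<and> (hd p \<in> Y) = (p!i \<in> Y) \<and> (p!j \<in> Y) = (last p \<in> Y)"
    using cut_ccut[OF ij dp, of Y] unfolding P1_def ccut_def by auto
  show "q \<in> P \<Longrightarrow> q \<noteq> p \<Longrightarrow> q \<in> P1 \<and> P1 - {q} = ((P - {q}) - {p}) \<union> cutp p i j"
    unfolding P1_def using notP by auto
qed




definition conn :: "'a set set \<Rightarrow> 'a list set \<Rightarrow> bool" where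
  "conn \<U> P \<longleftrightarrow> (\<forall>U\<in>\<U>. \<forall>U'\<in>\<U>. (\<lambda>A B. A \<in> \<U> \<and> B \<in> \<U> \<and> red_adj P A B)\<^sup>*\<^sup>* U U')"

lemma reduced_eulerian_iff: "reduced_eulerian \<U> P \<longleftrightarrow> conn \<U> P \<and> (\<forall>U\<in>\<U>. even (sum (dg U) P))"
  unfolding reduced_eulerian_def conn_def red_degree_dg by simp

lemma conn_closed:
  assumes pt: "partition_on V \<U>" and c: "conn \<U> P" and X: "X \<subseteq> \<U>" and cc: "ccut P (\<Union>X)"
    and Z1: "Z1 \<in> X" and Z2: "Z2 \<in> \<U>"
  shows "Z2 \<in> X"
proof -
  have r: "(\<lambda>A B. A \<in> \<U> \<and> B \<in> \<U> \<and> red_adj P A B)\<^sup>*\<^sup>* Z1 Z2" using c Z1 Z2 X unfolding conn_def by blast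
  have "\<And>B. (\<lambda>A B. A \<in> \<U> \<and> B \<in> \<U> \<and> red_adj P A B)\<^sup>*\<^sup>* Z1 B \<Longrightarrow> B \<in> X"
  proof -
    fix B assume "(\<lambda>A B. A \<in> \<U> \<and> B \<in> \<U> \<and> red_adj P A B)\<^sup>*\<^sup>* Z1 B"
    then show "B \<in> X"
    proof (induction rule: rtranclp_induct)
      case base then show ?case using Z1 .
    next
      case (step A B)
      then have AU: "A \<in> \<U>" and BU: "B \<in> \<U>" and AX: "A \<in> X" and ra: "red_adj P A B" by auto
      from ra obtain r where rP: "r \<in> P" and rr: "(hd r \<in> A \<and> last r \<in> B) \<or> (hd r \<in> B \<and> last r \<in> A)"
        unfolding red_adj_def by blast
      have eq: "(hd r \<in> \<Union>X) = (last r \<in> \<Union>X)" using cc rP unfolding ccut_def by blast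
      show ?case
      proof (cases "hd r \<in> A \<and> last r \<in> B")
        case True
        then have "last r \<in> \<Union>X" using eq AX by blast
        then obtain Z where "Z \<in> X" "last r \<in> Z" by blast
        then have "Z = B" using part_uniq[OF pt, of Z B "last r"] True BU X by blast
        then show ?thesis using \<open>Z \<in> X\<close> by simp
      next
        case False
        then have h: "hd r \<in> B \<and> last r \<in> A" using rr by blast
        then have "hd r \<in> \<Union>X" using eq AX by blast
        then obtain Z where "Z \<in> X" "hd r \<in> Z" by blast
        then have "Z = B" using part_uniq[OF pt, of Z B "hd r"] h BU X by blast
        then show ?thesis using \<open>Z \<in> X\<close> by simp
      qed
    qed
  qed
  then show ?thesis using r by blast
qed

lemma not_conn:
  assumes pt: "partition_on V \<U>" and hl: "\<forall>r\<in>P. hd r \<in> V \<and> last r \<in> V" and nc: "\<not> conn \<U> P"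
  shows "\<exists>X Z1 Z2. X \<subseteq> \<U> \<and> ccut P (\<Union>X) \<and> Z1 \<in> X \<and> Z2 \<in> \<U> \<and> Z2 \<notin> X"
proof -
  let ?R = "\<lambda>A B. A \<in> \<U> \<and> B \<in> \<U> \<and> red_adj P A B"
  obtain Z1 Z2 where Z: "Z1 \<in> \<U>" "Z2 \<in> \<U>" "\<not> ?R\<^sup>*\<^sup>* Z1 Z2" using nc unfolding conn_def by blast
  define X where "X = {Z\<in>\<U>. ?R\<^sup>*\<^sup>* Z1 Z}"
  have cc: "ccut P (\<Union>X)" unfolding ccut_def
  proof
    fix r assume rP: "r \<in> P"
    have hV: "hd r \<in> V" and lV: "last r \<in> V" using hl rP by auto
    obtain Bh where Bh: "Bh \<in> \<U>" "hd r \<in> Bh" using part_ex[OF pt hV] by blast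
    obtain Bl where Bl: "Bl \<in> \<U>" "last r \<in> Bl" using part_ex[OF pt lV] by blast
    have "red_adj P Bh Bl" unfolding red_adj_def using rP Bh Bl by blast
    moreover have "red_adj P Bl Bh" unfolding red_adj_def using rP Bh Bl by blast
    ultimately have s1: "?R Bh Bl" "?R Bl Bh" using Bh Bl by auto
    have mem: "w \<in> \<Union>X \<longleftrightarrow> B \<in> X" if "B \<in> \<U>" "w \<in> B" for w B
    proof
      assume "w \<in> \<Union>X"
      then obtain Z where "Z \<in> X" "w \<in> Z" by blast
      moreover then have "Z \<in> \<U>" unfolding X_def by simp
      ultimately have "Z = B" using part_uniq[OF pt, of Z B w] that by blast
      then show "B \<in> X" using \<open>Z \<in> X\<close> by simp
    qed (use that in blast)
    have "hd r \<in> \<Union>X \<longleftrightarrow> Bh \<in> X" using mem Bh by blast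
    moreover have "last r \<in> \<Union>X \<longleftrightarrow> Bl \<in> X" using mem Bl by blast
    moreover have "Bh \<in> X \<longleftrightarrow> Bl \<in> X"
    proof
      assume "Bh \<in> X"
      then have "?R\<^sup>*\<^sup>* Z1 Bh" unfolding X_def by simp
      then have "?R\<^sup>*\<^sup>* Z1 Bl" using s1(1) by (rule rtranclp.rtrancl_into_rtrancl)
      then show "Bl \<in> X" unfolding X_def using Bl by simp
    next
      assume "Bl \<in> X"
      then have "?R\<^sup>*\<^sup>* Z1 Bl" unfolding X_def by simp
      then have "?R\<^sup>*\<^sup>* Z1 Bh" using s1(2) by (rule rtranclp.rtrancl_into_rtrancl)
      then show "Bh \<in> X" unfolding X_def using Bh by simp
    qed
    ultimately show "(hd r \<in> \<Union>X) = (last r \<in> \<Union>X)" by blast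
  qed
  have "X \<subseteq> \<U>" "Z1 \<in> X" "Z2 \<notin> X" using Z unfolding X_def by auto
  then show ?thesis using cc Z by blast
qed

lemma ccut_compl:
  assumes pt: "partition_on V \<U>" and hl: "\<forall>r\<in>P. hd r \<in> V \<and> last r \<in> V" and X: "X \<subseteq> \<U>"
    and cc: "ccut P (\<Union>X)"
  shows "ccut P (\<Union>(\<U> - X))"
proof -
  have "v \<in> \<Union>(\<U> - X) \<longleftrightarrow> v \<notin> \<Union>X" if vV: "v \<in> V" for v
  proof
    assume "v \<in> \<Union>(\<U> - X)"
    then obtain Z where Z: "Z \<in> \<U>" "Z \<notin> X" "v \<in> Z" by blast
    show "v \<notin> \<Union>X"
    proof
      assume "v \<in> \<Union>X"
      then obtain Z' where "Z' \<in> X" "v \<in> Z'" by blast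
      then have "Z' = Z" using part_uniq[OF pt, of Z' Z v] X Z by blast
      then show False using Z \<open>Z' \<in> X\<close> by simp
    qed
  next
    assume "v \<notin> \<Union>X"
    obtain Z where "Z \<in> \<U>" "v \<in> Z" using part_ex[OF pt vV] by blast
    then show "v \<in> \<Union>(\<U> - X)" using \<open>v \<notin> \<Union>X\<close> by blast
  qed
  then show ?thesis using cc hl unfolding ccut_def by metis
qed

lemma Union_inter_part:
  assumes pt: "partition_on V \<U>" and X1: "X1 \<subseteq> \<U>" and X2: "X2 \<subseteq> \<U>"
  shows "v \<in> \<Union>(X1 \<inter> X2) \<longleftrightarrow> v \<in> \<Union>X1 \<and> v \<in> \<Union>X2"
proof
  assume "v \<in> \<Union>X1 \<and> v \<in> \<Union>X2"
  then obtain Z1 Z2 where "Z1 \<in> X1" "v \<in> Z1" "Z2 \<in> X2" "v \<in> Z2" by blast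
  moreover then have "Z1 = Z2" using part_uniq[OF pt, of Z1 Z2 v] X1 X2 by blast
  ultimately show "v \<in> \<Union>(X1 \<inter> X2)" by blast
qed blast

lemma sum_indicator_part:
  assumes pt: "partition_on V \<U>" and X: "X \<subseteq> \<U>" and fX: "finite X"
  shows "(\<Sum>Z\<in>X. (if v \<in> Z then 1 else 0::nat)) = (if v \<in> \<Union>X then 1 else 0)"
proof (cases "v \<in> \<Union>X")
  case True
  then obtain Z0 where Z0: "Z0 \<in> X" "v \<in> Z0" by blast
  have "(\<Sum>Z\<in>X. (if v \<in> Z then 1 else 0::nat)) = (\<Sum>Z\<in>{Z0}. (if v \<in> Z then 1 else 0::nat))"
  proof (intro sum.mono_neutral_right)
    show "\<forall>i\<in>X - {Z0}. (if v \<in> i then 1 else 0::nat) = 0"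
    proof
      fix Z assume "Z \<in> X - {Z0}"
      then have "v \<notin> Z" using part_uniq[OF pt, of Z Z0 v] Z0 X by blast
      then show "(if v \<in> Z then 1 else 0::nat) = 0" by simp
    qed
  qed (use Z0 fX in auto)
  then show ?thesis using True Z0 by simp
next
  case False
  then show ?thesis by auto
qed

lemma cut_parity:
  assumes pt: "partition_on V \<U>" and fV: "finite V" and fP: "finite P" and X: "X \<subseteq> \<U>"
    and ev: "\<forall>Z\<in>\<U>. even (sum (dg Z) P)"
  shows "even (\<Sum>r\<in>P. (if (hd r \<in> \<Union>X) \<noteq> (last r \<in> \<Union>X) then 1 else 0::nat))"
proof -
  have fU: "finite \<U>" using pt fV by (metis finite_UnionD partition_onD1)
  then have fX: "finite X" using X finite_subset by blast
  have e1: "even (\<Sum>Z\<in>X. sum (dg Z) P)" by (rule dvd_sum) (use ev X in auto)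
  have "(\<Sum>Z\<in>X. sum (dg Z) P) = (\<Sum>r\<in>P. \<Sum>Z\<in>X. dg Z r)" by (rule sum.swap)
  also have "\<dots> = (\<Sum>r\<in>P. (if hd r \<in> \<Union>X then 1 else 0) + (if last r \<in> \<Union>X then 1 else 0))"
    unfolding dg_def sum.distrib using sum_indicator_part[OF pt X fX] by simp
  also have "\<dots> = (\<Sum>r\<in>P. (if (hd r \<in> \<Union>X) \<noteq> (last r \<in> \<Union>X) then 1 else 0) + 2 * (if hd r \<in> \<Union>X \<and> last r \<in> \<Union>X then 1 else 0))"
    by (intro sum.cong) auto
  also have "\<dots> = (\<Sum>r\<in>P. (if (hd r \<in> \<Union>X) \<noteq> (last r \<in> \<Union>X) then 1 else 0)) + 2 * (\<Sum>r\<in>P. (if hd r \<in> \<Union>X \<and> last r \<in> \<Union>X then 1 else 0))"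
    by (simp add: sum.distrib sum_distrib_left)
  finally show ?thesis using e1 by simp
qed




lemma mem_Union_part:
  assumes pt: "partition_on V \<U>" and X: "X \<subseteq> \<U>" and Z: "Z \<in> \<U>" and v: "v \<in> Z"
  shows "v \<in> \<Union>X \<longleftrightarrow> Z \<in> X"
proof
  assume "v \<in> \<Union>X"
  then obtain Z' where "Z' \<in> X" "v \<in> Z'" by blast
  moreover then have "Z' = Z" using part_uniq[OF pt, of Z' Z v] X Z v by blast
  ultimately show "Z \<in> X" by simp
qed (use v in blast)

lemma ps_hl:
  assumes "is_graph V E" "path_system E P"
  shows "\<forall>r\<in>P. hd r \<in> V \<and> last r \<in> V"
  using hd_last_V[OF assms(1)] assms(2) unfolding path_system_def by blast

lemma even_helper:
  fixes a d c s x y :: nat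
  assumes "a + d = c + s" "even (s + d + x + y)" "even (x + y)" "even c"
  shows "even a"
  using assms by presburger

lemma bool_cross:
  assumes "(hx = ax)" "(bx = lx)" "(hy = ay)" "(by' = ly)" "(hs = ls)" "ax \<noteq> bx" "ay \<noteq> by'" "ax = ay"
  shows "(if (hs \<and> hx \<and> hy) \<noteq> (ls \<and> lx \<and> ly) then 1 else 0::nat)
       + (if (hs \<or> hx \<or> hy) \<noteq> (ls \<or> lx \<or> ly) then 1 else 0) = 1"
  using assms by auto

context
  fixes V :: "'a set" and E and \<U> :: "'a set set" and C :: "'a list set"
  assumes G: "is_graph V E" and pt: "partition_on V \<U>" and UC: "U_connecting E \<U> C"
    and mini: "\<forall>P'. U_connecting E \<U> P' \<longrightarrow> nedges C \<le> nedges P'"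
begin

lemma psC: "path_system E C" using UC unfolding U_connecting_def by simp
lemma fC: "finite C" using ps_finite[OF G psC] .
lemma hlC: "\<forall>r\<in>C. hd r \<in> V \<and> last r \<in> V" using ps_hl[OF G psC] .
lemma connC: "conn \<U> C" using UC unfolding U_connecting_def reduced_eulerian_iff by simp
lemma evC: "\<forall>Z\<in>\<U>. even (sum (dg Z) C)" using UC unfolding U_connecting_def reduced_eulerian_iff by simp
lemma fV: "finite V" using G unfolding is_graph_def by simp

lemma shortcut:
  assumes pC: "p \<in> C" and ij: "i < j" "j < length p" and Z: "Z \<in> \<U>" "p ! i \<in> Z" "p ! j \<in> Z"
  shows False
proof -
  define P1 where "P1 = (C - {p}) \<union> cutp p i j"
  have dp: "distinct p" using psC pC unfolding path_system_def is_path_def by auto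
  note oc = one_cut[OF psC pC ij, folded P1_def]
  have ps1: "path_system E P1" using oc(1) .
  have hl1: "\<forall>r\<in>P1. hd r \<in> V \<and> last r \<in> V" using ps_hl[OF G ps1] .
  have ne: "nedges P1 < nedges C"
  proof -
    have "nedges P1 + (length p - 1) = nedges C + (i + (length p - 1 - j))"
      unfolding nedges_def using oc(2)[OF fC, of "\<lambda>q. length q - 1"] cut_nedges[OF ij dp] by simp
    then show ?thesis using ij by linarith
  qed
  have ev1: "\<forall>W\<in>\<U>. even (sum (dg W) P1)"
  proof
    fix W assume W: "W \<in> \<U>"
    have e: "sum (dg W) P1 + dg W p = sum (dg W) C + sum (dg W) (cutp p i j)" using oc(2)[OF fC] .
    have e2: "even (sum (dg W) (cutp p i j) + dg W p + (if p!i \<in> W then 1 else 0) + (if p!j \<in> W then 1 else 0))"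
      using cut_dg[OF ij dp] .
    have "(p!i \<in> W) = (p!j \<in> W)" using part_uniq[OF pt] W Z by metis
    then have e3: "even ((if p!i \<in> W then 1 else 0) + (if p!j \<in> W then (1::nat) else 0))" by simp
    have e4: "even (sum (dg W) C)" using evC W by blast
    show "even (sum (dg W) P1)" using even_helper[OF e e2 e3 e4] .
  qed
  have c1: "conn \<U> P1"
  proof (rule ccontr)
    assume "\<not> conn \<U> P1"
    then obtain X Z1 Z2 where X: "X \<subseteq> \<U>" "ccut P1 (\<Union>X)" "Z1 \<in> X" "Z2 \<in> \<U>" "Z2 \<notin> X"
      using not_conn[OF pt hl1] by blast
    have cc: "ccut (C - {p}) (\<Union>X)" "(hd p \<in> \<Union>X) = (p!i \<in> \<Union>X)" "(p!j \<in> \<Union>X) = (last p \<in> \<Union>X)"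
      using oc(3) X(2) by auto
    have "(p!i \<in> \<Union>X) = (p!j \<in> \<Union>X)" using mem_Union_part[OF pt X(1) Z(1)] Z by simp
    then have "ccut C (\<Union>X)" using cc pC unfolding ccut_def by blast
    then have "Z2 \<in> X" using conn_closed[OF pt connC X(1) _ X(3,4)] by blast
    then show False using X by simp
  qed
  have "U_connecting E \<U> P1" unfolding U_connecting_def reduced_eulerian_iff using ps1 c1 ev1 by simp
  then show False using mini ne by fastforce
qed

lemma even_helper2:
  fixes a1 a2 a3 dp dq cp cq x1 y1 x2 y2 :: nat
  assumes "a2 + dq = a1 + cq" "a1 + dp = a3 + cp" "even (cp + dp + x1 + y1)" "even (cq + dq + x2 + y2)"
    "even (x1 + y1 + x2 + y2)" "even a3"
  shows "even a2"
  using assms by presburger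

lemma two_remove:
  assumes pC: "p \<in> C" and qC: "q \<in> C" and pq: "p \<noteq> q"
    and s: "Suc s < length p" and t: "Suc t < length q"
    and UW: "U \<in> \<U>" "W \<in> \<U>" "U \<noteq> W"
    and ep: "(p!s \<in> U \<and> p!Suc s \<in> W) \<or> (p!s \<in> W \<and> p!Suc s \<in> U)"
    and eq: "(q!t \<in> U \<and> q!Suc t \<in> W) \<or> (q!t \<in> W \<and> q!Suc t \<in> U)"
  shows "\<exists>X\<subseteq>\<U>. U \<in> X \<and> W \<notin> X \<and> ccut (C - {p} - {q}) (\<Union>X)
     \<and> (hd p \<in> \<Union>X) = (p!s \<in> \<Union>X) \<and> (p!Suc s \<in> \<Union>X) = (last p \<in> \<Union>X)
     \<and> (hd q \<in> \<Union>X) = (q!t \<in> \<Union>X) \<and> (q!Suc t \<in> \<Union>X) = (last q \<in> \<Union>X)"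
proof -
  define P1 where "P1 = (C - {p}) \<union> cutp p s (Suc s)"
  have dp: "distinct p" using psC pC unfolding path_system_def is_path_def by auto
  have dq: "distinct q" using psC qC unfolding path_system_def is_path_def by auto
  have ij1: "s < Suc s" "Suc s < length p" using s by auto
  have ij2: "t < Suc t" "Suc t < length q" using t by auto
  note oc = one_cut[OF psC pC ij1, folded P1_def]
  have ps1: "path_system E P1" using oc(1) .
  have fP1: "finite P1" using ps_finite[OF G ps1] .
  have qP1: "q \<in> P1" and P1q: "P1 - {q} = (C - {q} - {p}) \<union> cutp p s (Suc s)" using oc(4)[OF qC pq[symmetric]] by auto
  define P2 where "P2 = (P1 - {q}) \<union> cutp q t (Suc t)"
  note oc2 = one_cut[OF ps1 qP1 ij2, folded P2_def]
  have ps2: "path_system E P2" using oc2(1) .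
  have hl2: "\<forall>r\<in>P2. hd r \<in> V \<and> last r \<in> V" using ps_hl[OF G ps2] .
  have ne: "nedges P2 < nedges C"
  proof -
    have "nedges P1 + (length p - 1) = nedges C + (s + (length p - 1 - Suc s))"
      unfolding nedges_def using oc(2)[OF fC, of "\<lambda>q. length q - 1"] cut_nedges[OF ij1 dp] by simp
    moreover have "nedges P2 + (length q - 1) = nedges P1 + (t + (length q - 1 - Suc t))"
      unfolding nedges_def using oc2(2)[OF fP1, of "\<lambda>q. length q - 1"] cut_nedges[OF ij2 dq] by simp
    ultimately show ?thesis using s t by linarith
  qed
  have uniqU: "\<And>v Z. v \<in> U \<Longrightarrow> Z \<in> \<U> \<Longrightarrow> v \<in> Z \<longleftrightarrow> Z = U" using part_uniq[OF pt] UW by metis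
  have uniqW: "\<And>v Z. v \<in> W \<Longrightarrow> Z \<in> \<U> \<Longrightarrow> v \<in> Z \<longleftrightarrow> Z = W" using part_uniq[OF pt] UW by metis
  have ev2: "\<forall>Z\<in>\<U>. even (sum (dg Z) P2)"
  proof
    fix Z assume Z: "Z \<in> \<U>"
    have e1: "sum (dg Z) P1 + dg Z p = sum (dg Z) C + sum (dg Z) (cutp p s (Suc s))" using oc(2)[OF fC] .
    have e2: "sum (dg Z) P2 + dg Z q = sum (dg Z) P1 + sum (dg Z) (cutp q t (Suc t))" using oc2(2)[OF fP1] .
    have c1: "even (sum (dg Z) (cutp p s (Suc s)) + dg Z p + (if p!s \<in> Z then 1 else 0) + (if p!Suc s \<in> Z then 1 else 0))"
      using cut_dg[OF ij1 dp] .
    have c2: "even (sum (dg Z) (cutp q t (Suc t)) + dg Z q + (if q!t \<in> Z then 1 else 0) + (if q!Suc t \<in> Z then 1 else 0))"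
      using cut_dg[OF ij2 dq] .
    have "(p!s \<in> Z) \<noteq> (p!Suc s \<in> Z) \<longleftrightarrow> Z = U \<or> Z = W"
      using ep
    proof (elim disjE conjE)
      assume "p!s \<in> U" "p!Suc s \<in> W"
      then show ?thesis using uniqU[OF _ Z, of "p!s"] uniqW[OF _ Z, of "p!Suc s"] UW(3) by auto
    next
      assume "p!s \<in> W" "p!Suc s \<in> U"
      then show ?thesis using uniqU[OF _ Z, of "p!Suc s"] uniqW[OF _ Z, of "p!s"] UW(3) by auto
    qed
    moreover have "(q!t \<in> Z) \<noteq> (q!Suc t \<in> Z) \<longleftrightarrow> Z = U \<or> Z = W"
      using eq
    proof (elim disjE conjE)
      assume "q!t \<in> U" "q!Suc t \<in> W"
      then show ?thesis using uniqU[OF _ Z, of "q!t"] uniqW[OF _ Z, of "q!Suc t"] UW(3) by auto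
    next
      assume "q!t \<in> W" "q!Suc t \<in> U"
      then show ?thesis using uniqU[OF _ Z, of "q!Suc t"] uniqW[OF _ Z, of "q!t"] UW(3) by auto
    qed
    ultimately have c3: "even ((if p!s \<in> Z then 1 else 0) + (if p!Suc s \<in> Z then 1 else 0) + (if q!t \<in> Z then 1 else 0) + (if q!Suc t \<in> Z then (1::nat) else 0))"
      by auto
    have c4: "even (sum (dg Z) C)" using evC Z by blast
    show "even (sum (dg Z) P2)" using even_helper2[OF e2 e1 c1 c2 c3 c4] .
  qed
  have "\<not> U_connecting E \<U> P2" using mini ne by fastforce
  then have nc: "\<not> conn \<U> P2" unfolding U_connecting_def reduced_eulerian_iff using ps2 ev2 by simp
  obtain X0 Z1 Z2 where X0: "X0 \<subseteq> \<U>" "ccut P2 (\<Union>X0)" "Z1 \<in> X0" "Z2 \<in> \<U>" "Z2 \<notin> X0"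
    using not_conn[OF pt hl2 nc] by blast
  have dec: "ccut (C - {p} - {q}) (\<Union>X) \<and> (hd p \<in> \<Union>X) = (p!s \<in> \<Union>X) \<and> (p!Suc s \<in> \<Union>X) = (last p \<in> \<Union>X)
     \<and> (hd q \<in> \<Union>X) = (q!t \<in> \<Union>X) \<and> (q!Suc t \<in> \<Union>X) = (last q \<in> \<Union>X)"
    if "ccut P2 (\<Union>X)" for X
  proof -
    have a: "ccut (P1 - {q}) (\<Union>X)" "(hd q \<in> \<Union>X) = (q!t \<in> \<Union>X)" "(q!Suc t \<in> \<Union>X) = (last q \<in> \<Union>X)"
      using oc2(3) that by auto
    have b: "ccut (C - {q} - {p}) (\<Union>X)" "ccut (cutp p s (Suc s)) (\<Union>X)"
      using a(1) unfolding P1q ccut_def by auto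
    have "C - {q} - {p} = C - {p} - {q}" by auto
    then show ?thesis using a b cut_ccut[OF ij1 dp] by auto
  qed
  have sides: "(U \<in> X0) \<noteq> (W \<in> X0)"
  proof
    assume same: "(U \<in> X0) = (W \<in> X0)"
    have d: "ccut (C - {p} - {q}) (\<Union>X0) \<and> (hd p \<in> \<Union>X0) = (p!s \<in> \<Union>X0) \<and> (p!Suc s \<in> \<Union>X0) = (last p \<in> \<Union>X0)
     \<and> (hd q \<in> \<Union>X0) = (q!t \<in> \<Union>X0) \<and> (q!Suc t \<in> \<Union>X0) = (last q \<in> \<Union>X0)" using dec X0(2) .
    have mU: "\<And>v. v \<in> U \<Longrightarrow> v \<in> \<Union>X0 \<longleftrightarrow> U \<in> X0" using mem_Union_part[OF pt X0(1) UW(1)] .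
    have mW: "\<And>v. v \<in> W \<Longrightarrow> v \<in> \<Union>X0 \<longleftrightarrow> W \<in> X0" using mem_Union_part[OF pt X0(1) UW(2)] .
    have "(p!s \<in> \<Union>X0) = (p!Suc s \<in> \<Union>X0)"
      using ep
    proof (elim disjE conjE)
      assume "p!s \<in> U" "p!Suc s \<in> W"
      then show ?thesis using mU[of "p!s"] mW[of "p!Suc s"] same by (simp only:)
    next
      assume "p!s \<in> W" "p!Suc s \<in> U"
      then show ?thesis using mU[of "p!Suc s"] mW[of "p!s"] same by (simp only:)
    qed
    moreover have "(q!t \<in> \<Union>X0) = (q!Suc t \<in> \<Union>X0)"
      using eq
    proof (elim disjE conjE)
      assume "q!t \<in> U" "q!Suc t \<in> W"
      then show ?thesis using mU[of "q!t"] mW[of "q!Suc t"] same by (simp only:)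
    next
      assume "q!t \<in> W" "q!Suc t \<in> U"
      then show ?thesis using mU[of "q!Suc t"] mW[of "q!t"] same by (simp only:)
    qed
    ultimately have pp: "(hd p \<in> \<Union>X0) = (last p \<in> \<Union>X0)" and qq: "(hd q \<in> \<Union>X0) = (last q \<in> \<Union>X0)"
      using d by simp_all
    have "ccut C (\<Union>X0)" unfolding ccut_def
    proof
      fix r assume rC: "r \<in> C"
      show "(hd r \<in> \<Union>X0) = (last r \<in> \<Union>X0)"
      proof (cases "r = p \<or> r = q")
        case True then show ?thesis using pp qq by auto
      next
        case False then have "r \<in> C - {p} - {q}" using rC by simp
        then show ?thesis using conjunct1[OF d] unfolding ccut_def by blast
      qed
    qed
    then have "Z2 \<in> X0" using conn_closed[OF pt connC X0(1) _ X0(3,4)] by blast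
    then show False using X0 by simp
  qed
  define X where "X = (if U \<in> X0 then X0 else \<U> - X0)"
  have XU: "X \<subseteq> \<U>" unfolding X_def using X0 by auto
  have ccX: "ccut P2 (\<Union>X)" unfolding X_def using X0 ccut_compl[OF pt hl2 X0(1,2)] by auto
  have UX: "U \<in> X" "W \<notin> X" unfolding X_def using sides UW by auto
  show ?thesis by (rule exI[of _ X]) (use XU UX dec[OF ccX] in simp)
qed

end



lemma bc1:
  assumes "h2 = u" "(\<not>u) = l2" "h3 = u" "(\<not>u) = l3" "h1 = l1"
  shows "(if (h1\<and>h2\<and>h3) \<noteq> (l1\<and>l2\<and>l3) then 1 else 0::nat) + (if (h1\<or>h2\<or>h3) \<noteq> (l1\<or>l2\<or>l3) then 1 else 0) = 1"
  using assms by auto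
lemma bc2:
  assumes "h1 = u" "(\<not>u) = l1" "h3 = u" "(\<not>u) = l3" "h2 = l2"
  shows "(if (h1\<and>h2\<and>h3) \<noteq> (l1\<and>l2\<and>l3) then 1 else 0::nat) + (if (h1\<or>h2\<or>h3) \<noteq> (l1\<or>l2\<or>l3) then 1 else 0) = 1"
  using assms by auto
lemma bc3:
  assumes "h1 = u" "(\<not>u) = l1" "h2 = u" "(\<not>u) = l2" "h3 = l3"
  shows "(if (h1\<and>h2\<and>h3) \<noteq> (l1\<and>l2\<and>l3) then 1 else 0::nat) + (if (h1\<or>h2\<or>h3) \<noteq> (l1\<or>l2\<or>l3) then 1 else 0) = 1"
  using assms by auto

lemma orient:
  assumes pt: "partition_on V \<U>" and X: "X \<subseteq> \<U>" and UW: "U \<in> \<U>" "W \<in> \<U>" "U \<noteq> W"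
    and UX: "U \<in> X" "W \<notin> X"
    and ep: "(a \<in> U \<and> b \<in> W) \<or> (a \<in> W \<and> b \<in> U)"
  shows "(a \<in> \<Union>X) = (a \<in> U)" "(b \<in> \<Union>X) = (\<not> a \<in> U)"
proof -
  have mU: "\<And>v. v \<in> U \<Longrightarrow> v \<in> \<Union>X" using UX by blast
  have mW: "\<And>v. v \<in> W \<Longrightarrow> v \<notin> \<Union>X" using mem_Union_part[OF pt X UW(2)] UX by blast
  have dUW: "\<And>v. v \<in> W \<Longrightarrow> v \<notin> U" using part_uniq[OF pt UW(1,2)] UW(3) by blast
  have "(a \<in> \<Union>X) = (a \<in> U) \<and> (b \<in> \<Union>X) = (\<not> a \<in> U)"
    using ep
  proof (elim disjE conjE)
    assume "a \<in> U" "b \<in> W"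
    then show ?thesis using mU mW by auto
  next
    assume "a \<in> W" "b \<in> U"
    then show ?thesis using mU mW dUW by auto
  qed
  then show "(a \<in> \<Union>X) = (a \<in> U)" "(b \<in> \<Union>X) = (\<not> a \<in> U)" by simp_all
qed

context
  fixes V :: "'a set" and E and \<U> :: "'a set set" and C :: "'a list set"
  assumes G: "is_graph V E" and pt: "partition_on V \<U>" and UC: "U_connecting E \<U> C"
    and mini: "\<forall>P'. U_connecting E \<U> P' \<longrightarrow> nedges C \<le> nedges P'"
begin

lemma three:
  assumes p: "p1 \<in> C" "p2 \<in> C" "p3 \<in> C" "p1 \<noteq> p2" "p1 \<noteq> p3" "p2 \<noteq> p3"
    and s: "Suc s1 < length p1" "Suc s2 < length p2" "Suc s3 < length p3"
    and UW: "U \<in> \<U>" "W \<in> \<U>" "U \<noteq> W"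
    and e1: "(p1!s1 \<in> U \<and> p1!Suc s1 \<in> W) \<or> (p1!s1 \<in> W \<and> p1!Suc s1 \<in> U)"
    and e2: "(p2!s2 \<in> U \<and> p2!Suc s2 \<in> W) \<or> (p2!s2 \<in> W \<and> p2!Suc s2 \<in> U)"
    and e3: "(p3!s3 \<in> U \<and> p3!Suc s3 \<in> W) \<or> (p3!s3 \<in> W \<and> p3!Suc s3 \<in> U)"
  shows False
proof -
  note tr = two_remove[OF G pt UC mini]
  obtain X1 where X1: "X1 \<subseteq> \<U>" "U \<in> X1" "W \<notin> X1" "ccut (C - {p2} - {p3}) (\<Union>X1)"
     "(hd p2 \<in> \<Union>X1) = (p2!s2 \<in> \<Union>X1)" "(p2!Suc s2 \<in> \<Union>X1) = (last p2 \<in> \<Union>X1)"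
     "(hd p3 \<in> \<Union>X1) = (p3!s3 \<in> \<Union>X1)" "(p3!Suc s3 \<in> \<Union>X1) = (last p3 \<in> \<Union>X1)"
    using tr[OF p(2,3,6) s(2,3) UW e2 e3] by (elim exE conjE) (rule that; assumption)
  obtain X2 where X2: "X2 \<subseteq> \<U>" "U \<in> X2" "W \<notin> X2" "ccut (C - {p1} - {p3}) (\<Union>X2)"
     "(hd p1 \<in> \<Union>X2) = (p1!s1 \<in> \<Union>X2)" "(p1!Suc s1 \<in> \<Union>X2) = (last p1 \<in> \<Union>X2)"
     "(hd p3 \<in> \<Union>X2) = (p3!s3 \<in> \<Union>X2)" "(p3!Suc s3 \<in> \<Union>X2) = (last p3 \<in> \<Union>X2)"
    using tr[OF p(1,3,5) s(1,3) UW e1 e3] by (elim exE conjE) (rule that; assumption)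
  obtain X3 where X3: "X3 \<subseteq> \<U>" "U \<in> X3" "W \<notin> X3" "ccut (C - {p1} - {p2}) (\<Union>X3)"
     "(hd p1 \<in> \<Union>X3) = (p1!s1 \<in> \<Union>X3)" "(p1!Suc s1 \<in> \<Union>X3) = (last p1 \<in> \<Union>X3)"
     "(hd p2 \<in> \<Union>X3) = (p2!s2 \<in> \<Union>X3)" "(p2!Suc s2 \<in> \<Union>X3) = (last p2 \<in> \<Union>X3)"
    using tr[OF p(1,2,4) s(1,2) UW e1 e2] by (elim exE conjE) (rule that; assumption)
  note o1 = orient[OF pt X1(1) UW X1(2,3)]
  note o2 = orient[OF pt X2(1) UW X2(2,3)]
  note o3 = orient[OF pt X3(1) UW X3(2,3)]
  define Ia where "Ia = X1 \<inter> X2 \<inter> X3"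
  define Iu where "Iu = X1 \<union> X2 \<union> X3"
  have IaU: "Ia \<subseteq> \<U>" and IuU: "Iu \<subseteq> \<U>" unfolding Ia_def Iu_def using X1(1) X2(1) X3(1) by auto
  have i12: "X1 \<inter> X2 \<subseteq> \<U>" using X1(1) by blast
  have memIa: "v \<in> \<Union>Ia \<longleftrightarrow> v \<in> \<Union>X1 \<and> v \<in> \<Union>X2 \<and> v \<in> \<Union>X3" for v
  proof -
    have m12: "v \<in> \<Union>(X1 \<inter> X2) \<longleftrightarrow> v \<in> \<Union>X1 \<and> v \<in> \<Union>X2" by (rule Union_inter_part[OF pt X1(1) X2(1)])
    have m: "v \<in> \<Union>(X1 \<inter> X2 \<inter> X3) \<longleftrightarrow> v \<in> \<Union>(X1 \<inter> X2) \<and> v \<in> \<Union>X3" by (rule Union_inter_part[OF pt i12 X3(1)])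
    show ?thesis unfolding Ia_def m m12 by (rule conj_assoc)
  qed
  have memIu: "\<And>v. v \<in> \<Union>Iu \<longleftrightarrow> v \<in> \<Union>X1 \<or> v \<in> \<Union>X2 \<or> v \<in> \<Union>X3"
    unfolding Iu_def by blast
  define g where "g r = (if (hd r \<in> \<Union>X1 \<and> hd r \<in> \<Union>X2 \<and> hd r \<in> \<Union>X3) \<noteq> (last r \<in> \<Union>X1 \<and> last r \<in> \<Union>X2 \<and> last r \<in> \<Union>X3) then 1 else 0::nat)
     + (if (hd r \<in> \<Union>X1 \<or> hd r \<in> \<Union>X2 \<or> hd r \<in> \<Union>X3) \<noteq> (last r \<in> \<Union>X1 \<or> last r \<in> \<Union>X2 \<or> last r \<in> \<Union>X3) then 1 else 0)" for r
  have fVV: "finite V" using G unfolding is_graph_def by simp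
  have evA: "even (\<Sum>r\<in>C. (if (hd r \<in> \<Union>Ia) \<noteq> (last r \<in> \<Union>Ia) then 1 else 0::nat))"
    using cut_parity[OF pt fVV fC[OF G pt UC mini] IaU evC[OF G pt UC mini]] .
  have evO: "even (\<Sum>r\<in>C. (if (hd r \<in> \<Union>Iu) \<noteq> (last r \<in> \<Union>Iu) then 1 else 0::nat))"
    using cut_parity[OF pt fVV fC[OF G pt UC mini] IuU evC[OF G pt UC mini]] .
  have evg: "even (sum g C)"
  proof -
    have "sum g C = (\<Sum>r\<in>C. (if (hd r \<in> \<Union>Ia) \<noteq> (last r \<in> \<Union>Ia) then 1 else 0::nat))
       + (\<Sum>r\<in>C. (if (hd r \<in> \<Union>Iu) \<noteq> (last r \<in> \<Union>Iu) then 1 else 0::nat))"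
      unfolding g_def sum.distrib[symmetric] by (simp only: memIa memIu)
    then show ?thesis using evA evO by simp
  qed
  have g0: "\<forall>r\<in>C - {p1, p2, p3}. g r = 0"
  proof
    fix r assume r: "r \<in> C - {p1, p2, p3}"
    have r1: "r \<in> C - {p2} - {p3}" and r2: "r \<in> C - {p1} - {p3}" and r3: "r \<in> C - {p1} - {p2}" using r by simp_all
    have h1: "(hd r \<in> \<Union>X1) = (last r \<in> \<Union>X1)" using X1(4)[unfolded ccut_def] r1 by (rule bspec)
    have h2: "(hd r \<in> \<Union>X2) = (last r \<in> \<Union>X2)" using X2(4)[unfolded ccut_def] r2 by (rule bspec)
    have h3: "(hd r \<in> \<Union>X3) = (last r \<in> \<Union>X3)" using X3(4)[unfolded ccut_def] r3 by (rule bspec)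
    show "g r = 0" unfolding g_def using h1 h2 h3 by simp
  qed
  have "sum g C = sum g {p1, p2, p3}"
    using g0 p fC[OF G pt UC mini] by (intro sum.mono_neutral_right) auto
  also have "\<dots> = g p1 + g p2 + g p3" using p by simp
  also have "g p1 = 1"
  proof -
    have "p1 \<in> C - {p2} - {p3}" using p by simp
    then have a: "(hd p1 \<in> \<Union>X1) = (last p1 \<in> \<Union>X1)" using X1(4)[unfolded ccut_def] by (rule bspec[rotated])
    show ?thesis unfolding g_def
      by (rule bc1[OF trans[OF X2(5) o2(1)[OF e1]] trans[OF o2(2)[OF e1, symmetric] X2(6)]
         trans[OF X3(5) o3(1)[OF e1]] trans[OF o3(2)[OF e1, symmetric] X3(6)] a])
  qed
  also have "g p2 = 1"
  proof -
    have "p2 \<in> C - {p1} - {p3}" using p by simp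
    then have a: "(hd p2 \<in> \<Union>X2) = (last p2 \<in> \<Union>X2)" using X2(4)[unfolded ccut_def] by (rule bspec[rotated])
    show ?thesis unfolding g_def
      by (rule bc2[OF trans[OF X1(5) o1(1)[OF e2]] trans[OF o1(2)[OF e2, symmetric] X1(6)]
         trans[OF X3(7) o3(1)[OF e2]] trans[OF o3(2)[OF e2, symmetric] X3(8)] a])
  qed
  also have "g p3 = 1"
  proof -
    have "p3 \<in> C - {p1} - {p2}" using p by simp
    then have a: "(hd p3 \<in> \<Union>X3) = (last p3 \<in> \<Union>X3)" using X3(4)[unfolded ccut_def] by (rule bspec[rotated])
    show ?thesis unfolding g_def
      by (rule bc3[OF trans[OF X1(7) o1(1)[OF e3]] trans[OF o1(2)[OF e3, symmetric] X1(8)]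
         trans[OF X2(7) o2(1)[OF e3]] trans[OF o2(2)[OF e3, symmetric] X2(8)] a])
  qed
  finally show False using evg by simp
qed

end



lemma card3:
  assumes "2 < card S"
  shows "\<exists>a b c. a \<in> S \<and> b \<in> S \<and> c \<in> S \<and> a \<noteq> b \<and> a \<noteq> c \<and> b \<noteq> c"
proof -
  have fS: "finite S" using assms card.infinite by force
  obtain a where a: "a \<in> S" using assms by (metis card.empty ex_in_conv not_less_zero)
  have c1: "1 < card (S - {a})" using assms a fS by (simp add: card_Diff_singleton)
  obtain b where b: "b \<in> S - {a}" using c1 by (metis card.empty ex_in_conv not_less_zero)
  have c2: "0 < card (S - {a} - {b})" using c1 b fS by (simp add: card_Diff_singleton)
  obtain c where c: "c \<in> S - {a} - {b}" using c2 by (metis card.empty ex_in_conv less_irrefl)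
  show ?thesis using a b c by blast
qed

lemma orient_edge:
  assumes pt: "partition_on V \<U>" and UW: "U \<in> \<U>" "W \<in> \<U>" "U \<noteq> W"
    and h: "{x, y} \<inter> U \<noteq> {}" "{x, y} \<inter> W \<noteq> {}"
  shows "(x \<in> U \<and> y \<in> W) \<or> (x \<in> W \<and> y \<in> U)"
proof -
  have d: "\<And>v. v \<in> U \<Longrightarrow> v \<notin> W" using part_uniq[OF pt UW(1,2)] UW(3) by blast
  show ?thesis using h d by blast
qed

theorem mainTheorem13:
  fixes V :: "'a set" and E :: "'a \<Rightarrow> 'a \<Rightarrow> bool"
    and \<U> :: "'a set set" and \<C> :: "'a list set"
  assumes "is_graph V E"
    and "partition_on V \<U>"
    and "U_connecting E \<U> \<C>"
  shows "\<exists>\<C>'. U_connecting E \<U> \<C>' \<and>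
           (\<forall>e\<in>ps_edges \<C>'. \<forall>U\<in>\<U>. \<not> e \<subseteq> U) \<and>
           (\<forall>U\<in>\<U>. \<forall>W\<in>\<U>. U \<noteq> W \<longrightarrow>
              card {e \<in> ps_edges \<C>'. e \<inter> U \<noteq> {} \<and> e \<inter> W \<noteq> {}} \<le> 2)"
proof -
  obtain C where UC: "U_connecting E \<U> C" and mn: "\<forall>P. U_connecting E \<U> P \<longrightarrow> nedges C \<le> nedges P"
    using ex_has_least_nat[of "U_connecting E \<U>" \<C> nedges] assms(3) by blast
  note G = assms(1) and pt = assms(2)
  have L1: "\<And>p i j Z. p \<in> C \<Longrightarrow> i < j \<Longrightarrow> j < length p \<Longrightarrow> Z \<in> \<U> \<Longrightarrow> p!i \<in> Z \<Longrightarrow> p!j \<in> Z \<Longrightarrow> False"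
    using shortcut[OF G pt UC mn] by blast
  have inj: "i = j" if "p \<in> C" "i < length p" "j < length p" "Z \<in> \<U>" "p!i \<in> Z" "p!j \<in> Z" for p i j Z
  proof (rule ccontr)
    assume "i \<noteq> j"
    then have "i < j \<or> j < i" by arith
    then show False using L1[of p i j Z] L1[of p j i Z] that by blast
  qed
  have A: "\<forall>e\<in>ps_edges C. \<forall>U\<in>\<U>. \<not> e \<subseteq> U"
  proof (intro ballI notI)
    fix e U assume e: "e \<in> ps_edges C" and U: "U \<in> \<U>" and sub: "e \<subseteq> U"
    from e obtain p i where "e = {p!i, p!Suc i}" "p \<in> C" "Suc i < length p" unfolding ps_edges_def by blast
    then show False using L1[of p i "Suc i" U] U sub by auto
  qed
  have B: "card {e \<in> ps_edges C. e \<inter> U \<noteq> {} \<and> e \<inter> W \<noteq> {}} \<le> 2" if UW: "U \<in> \<U>" "W \<in> \<U>" "U \<noteq> W" for U W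
  proof (rule ccontr)
    define S where "S = {e \<in> ps_edges C. e \<inter> U \<noteq> {} \<and> e \<inter> W \<noteq> {}}"
    assume "\<not> card {e \<in> ps_edges C. e \<inter> U \<noteq> {} \<and> e \<inter> W \<noteq> {}} \<le> 2"
    then have "2 < card S" unfolding S_def by simp
    then obtain e1 e2 e3 where es: "e1 \<in> S" "e2 \<in> S" "e3 \<in> S" "e1 \<noteq> e2" "e1 \<noteq> e3" "e2 \<noteq> e3"
      using card3 by (elim card3[elim_format] exE conjE) (rule that; assumption)
    have info: "\<exists>p s. p \<in> C \<and> Suc s < length p \<and> e = {p!s, p!Suc s} \<and>
        ((p!s \<in> U \<and> p!Suc s \<in> W) \<or> (p!s \<in> W \<and> p!Suc s \<in> U))" if "e \<in> S" for e
      proof -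
      from that obtain p s where ps: "e = {p!s, p!Suc s}" "p \<in> C" "Suc s < length p"
        and h: "e \<inter> U \<noteq> {}" "e \<inter> W \<noteq> {}" unfolding S_def ps_edges_def by blast
      have "(p!s \<in> U \<and> p!Suc s \<in> W) \<or> (p!s \<in> W \<and> p!Suc s \<in> U)"
        using orient_edge[OF pt UW] h ps(1) by blast
      then show ?thesis using ps by blast
    qed
    have same: "s = t" if "p \<in> C" "Suc s < length p" "Suc t < length p"
      "(p!s \<in> U \<and> p!Suc s \<in> W) \<or> (p!s \<in> W \<and> p!Suc s \<in> U)"
      "(p!t \<in> U \<and> p!Suc t \<in> W) \<or> (p!t \<in> W \<and> p!Suc t \<in> U)" for p s t
    proof -
      have iU: "\<And>a b. a < length p \<Longrightarrow> b < length p \<Longrightarrow> p!a \<in> U \<Longrightarrow> p!b \<in> U \<Longrightarrow> a = b"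
        using inj[OF that(1)] UW(1) by blast
      have iW: "\<And>a b. a < length p \<Longrightarrow> b < length p \<Longrightarrow> p!a \<in> W \<Longrightarrow> p!b \<in> W \<Longrightarrow> a = b"
        using inj[OF that(1)] UW(2) by blast
      show ?thesis
        using that(4,5)
      proof (elim disjE conjE)
        assume "p!s \<in> U" "p!t \<in> U" then show ?thesis using iU[of s t] that(2,3) by simp
      next
        assume "p!s \<in> U" "p!Suc s \<in> W" "p!t \<in> W" "p!Suc t \<in> U"
        then have "s = Suc t" "Suc s = t" using iU[of s "Suc t"] iW[of "Suc s" t] that(2,3) by simp_all
        then show ?thesis by simp
      next
        assume "p!s \<in> W" "p!Suc s \<in> U" "p!t \<in> U" "p!Suc t \<in> W"
        then have "Suc s = t" "s = Suc t" using iU[of "Suc s" t] iW[of s "Suc t"] that(2,3) by simp_all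
        then show ?thesis by simp
      next
        assume "p!s \<in> W" "p!t \<in> W" then show ?thesis using iW[of s t] that(2,3) by simp
      qed
    qed
    obtain p1 s1 where P1: "p1 \<in> C" "Suc s1 < length p1" "e1 = {p1!s1, p1!Suc s1}"
        "(p1!s1 \<in> U \<and> p1!Suc s1 \<in> W) \<or> (p1!s1 \<in> W \<and> p1!Suc s1 \<in> U)"
      using info[OF es(1)] by blast
    obtain p2 s2 where P2: "p2 \<in> C" "Suc s2 < length p2" "e2 = {p2!s2, p2!Suc s2}"
        "(p2!s2 \<in> U \<and> p2!Suc s2 \<in> W) \<or> (p2!s2 \<in> W \<and> p2!Suc s2 \<in> U)"
      using info[OF es(2)] by blast
    obtain p3 s3 where P3: "p3 \<in> C" "Suc s3 < length p3" "e3 = {p3!s3, p3!Suc s3}"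
        "(p3!s3 \<in> U \<and> p3!Suc s3 \<in> W) \<or> (p3!s3 \<in> W \<and> p3!Suc s3 \<in> U)"
      using info[OF es(3)] by blast
    have d12: "p1 \<noteq> p2"
    proof
      assume "p1 = p2"
      then have "s1 = s2" using same[of p1 s1 s2] P1 P2 by simp
      then show False using P1(3) P2(3) es(4) \<open>p1 = p2\<close> by simp
    qed
    have d13: "p1 \<noteq> p3"
    proof
      assume "p1 = p3"
      then have "s1 = s3" using same[of p1 s1 s3] P1 P3 by simp
      then show False using P1(3) P3(3) es(5) \<open>p1 = p3\<close> by simp
    qed
    have d23: "p2 \<noteq> p3"
    proof
      assume "p2 = p3"
      then have "s2 = s3" using same[of p2 s2 s3] P2 P3 by simp
      then show False using P2(3) P3(3) es(6) \<open>p2 = p3\<close> by simp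
    qed
    show False
      using three[OF G pt UC mn P1(1) P2(1) P3(1) d12 d13 d23 P1(2) P2(2) P3(2) UW P1(4) P2(4) P3(4)] .
  qed
  show ?thesis using UC A B by blast
qed


end
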